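(* Let $G$ be a graph with an RDV representation on a rooted tree $T$, and let $v_1$ be a vertex of $G$ that maximizes $y(t(v_1))$ (the distance of $t(v_1)$ from the root) over all vertices. Then $v_1$ is simple in $G$: its closed neighbourhood $N[v_1]$ is a clique, and its elements can be ordered $w_1,\dots,w_k$ so that $N[w_1]\subseteq N[w_2]\subseteq\cdots\subseteq N[w_k]$.
   Context: An RDV representation of a graph $G$ consists of a rooted tree $T$ and, for every vertex $v$ of $G$, a downward path $P(v)$ in $T$ (a path starting at some node and always proceeding from a node to one of its children), such that distinct $v,w$ are adjacent iff $P(v)$ and $P(w)$ share a node. $t(v)$ is the node of $P(v)$ closest to the root, and $y(u)$ denotes the distance of node $u$ from the root. $N[v]$ is the closed neighbourhood of $v$ (the set consisting of $v$ and its neighbours). *)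

theory Defs
  imports Main
begin

definition simple_graph :: "'v set \<Rightarrow> ('v \<Rightarrow> 'v \<Rightarrow> bool) \<Rightarrow> bool" where
  "simple_graph V E \<longleftrightarrow> finite V \<and> (\<forall>a b. E a b \<longrightarrow> a \<in> V \<and> b \<in> V)
     \<and> (\<forall>a b. E a b \<longrightarrow> E b a) \<and> (\<forall>a. \<not> E a a)"

definition closed_nbhd :: "'v set \<Rightarrow> ('v \<Rightarrow> 'v \<Rightarrow> bool) \<Rightarrow> 'v \<Rightarrow> 'v set" where
  "closed_nbhd V E v = {v} \<union> {w \<in> V. E v w}"

definition is_clique :: "('v \<Rightarrow> 'v \<Rightarrow> bool) \<Rightarrow> 'v set \<Rightarrow> bool" where
  "is_clique E C \<longleftrightarrow> (\<forall>a\<in>C. \<forall>b\<in>C. a \<noteq> b \<longrightarrow> E a b)"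

definition simple_vertex :: "'v set \<Rightarrow> ('v \<Rightarrow> 'v \<Rightarrow> bool) \<Rightarrow> 'v \<Rightarrow> bool" where
  "simple_vertex V E v \<longleftrightarrow> is_clique E (closed_nbhd V E v) \<and>
     (\<exists>ws. distinct ws \<and> set ws = closed_nbhd V E v \<and>
        sorted_wrt (\<lambda>a b. closed_nbhd V E a \<subseteq> closed_nbhd V E b) ws)"

text \<open>The tree edges are exactly the pairs (u, par u) for u in N - {r}.\<close>
definition rooted_tree :: "'n set \<Rightarrow> 'n \<Rightarrow> ('n \<Rightarrow> 'n) \<Rightarrow> bool" where
  "rooted_tree N r par \<longleftrightarrow> finite N \<and> r \<in> N \<and>
     (\<forall>u\<in>N - {r}. par u \<in> N) \<and> (\<forall>u\<in>N. \<exists>k. (par ^^ k) u = r)"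

definition depth :: "'n \<Rightarrow> ('n \<Rightarrow> 'n) \<Rightarrow> 'n \<Rightarrow> nat" where
  "depth r par u = (LEAST k. (par ^^ k) u = r)"

definition downward_path :: "'n set \<Rightarrow> 'n \<Rightarrow> ('n \<Rightarrow> 'n) \<Rightarrow> 'n list \<Rightarrow> bool" where
  "downward_path N r par p \<longleftrightarrow> p \<noteq> [] \<and> set p \<subseteq> N \<and>
     (\<forall>i. Suc i < length p \<longrightarrow> p ! Suc i \<noteq> r \<and> par (p ! Suc i) = p ! i)"

definition rdv_rep :: "'v set \<Rightarrow> ('v \<Rightarrow> 'v \<Rightarrow> bool) \<Rightarrow> 'n set \<Rightarrow> 'n \<Rightarrow> ('n \<Rightarrow> 'n)
    \<Rightarrow> ('v \<Rightarrow> 'n list) \<Rightarrow> bool" where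
  "rdv_rep V E N r par P \<longleftrightarrow> rooted_tree N r par \<and>
     (\<forall>v\<in>V. downward_path N r par (P v)) \<and>
     (\<forall>v\<in>V. \<forall>w\<in>V. v \<noteq> w \<longrightarrow> (E v w \<longleftrightarrow> set (P v) \<inter> set (P w) \<noteq> {}))"

text \<open>t(v): the node of P(v) closest to the root (the head of the downward path).\<close>
definition top_node :: "('v \<Rightarrow> 'n list) \<Rightarrow> 'v \<Rightarrow> 'n" where
  "top_node P v = hd (P v)"

end

theory Submission
  imports Defs
begin

lemma depth_par:
  assumes T: "rooted_tree N r par" and x: "x \<in> N" "x \<noteq> r"
  shows "depth r par x = Suc (depth r par (par x))"
proof -
  have px: "par x \<in> N" using T x unfolding rooted_tree_def by auto
  obtain k where k: "(par ^^ k) (par x) = r" using T px unfolding rooted_tree_def by auto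
  obtain m where m: "(par ^^ m) x = r" using T x unfolding rooted_tree_def by auto
  define n where "n = depth r par (par x)"
  have n: "(par ^^ n) (par x) = r" unfolding n_def depth_def using k by (rule LeastI)
  have "(par ^^ Suc n) x = r" using n by (simp add: funpow_Suc_right del: funpow.simps)
  hence le1: "depth r par x \<le> Suc n" unfolding depth_def by (rule Least_le)
  have dm: "(par ^^ depth r par x) x = r" unfolding depth_def using m by (rule LeastI)
  then obtain m' where m': "depth r par x = Suc m'" using x by (cases "depth r par x") auto
  hence "(par ^^ m') (par x) = r" using dm by (simp add: funpow_Suc_right del: funpow.simps)
  hence "n \<le> m'" unfolding n_def depth_def by (rule Least_le)
  thus ?thesis using le1 m' n_def by simp
qed

lemma path_depth:
  assumes T: "rooted_tree N r par" and p: "downward_path N r par p"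
  shows "i < length p \<Longrightarrow> depth r par (p ! i) = depth r par (p ! 0) + i"
proof (induction i)
  case 0 then show ?case by simp
next
  case (Suc i)
  have a: "p ! Suc i \<noteq> r" "par (p ! Suc i) = p ! i" using p Suc.prems unfolding downward_path_def by auto
  have b: "p ! Suc i \<in> N" using p Suc.prems unfolding downward_path_def by (meson nth_mem subsetD)
  show ?case using depth_par[OF T b a(1)] a Suc by simp
qed

lemma path_par:
  assumes p: "downward_path N r par p"
  shows "k + i < length p \<Longrightarrow> (par ^^ k) (p ! (i + k)) = p ! i"
proof (induction k arbitrary: i)
  case 0 then show ?case by simp
next
  case (Suc k)
  have "par (p ! (i + Suc k)) = p ! (i + k)" using p Suc.prems unfolding downward_path_def
    by (metis add_Suc_right add_Suc_shift add_lessD1 add.commute)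
  then show ?case using Suc by (simp add: funpow_Suc_right del: funpow.simps)
qed

lemma meet:
  assumes T: "rooted_tree N r par" and p: "downward_path N r par p" and q: "downward_path N r par q"
    and i: "i < length p" and j: "j < length q" and eq: "p ! i = q ! j"
    and kd: "depth r par (hd q) \<le> depth r par (p ! k)" and ki: "k \<le> i"
  shows "p ! k \<in> set q"
proof -
  have hq: "hd q = q ! 0" using q unfolding downward_path_def by (simp add: hd_conv_nth)
  have d1: "depth r par (p ! i) = depth r par (p ! 0) + i" using path_depth[OF T p i] .
  have d2: "depth r par (p ! k) = depth r par (p ! 0) + k" using path_depth[OF T p] ki i by simp
  have d3: "depth r par (q ! j) = depth r par (q ! 0) + j" using path_depth[OF T q j] .
  have ji: "i - k \<le> j" using d1 d2 d3 kd hq eq ki by simp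
  have "(par ^^ (i - k)) (q ! (j - (i - k) + (i - k))) = q ! (j - (i - k))"
    using path_par[OF q, of "i - k" "j - (i - k)"] j ji by simp
  moreover have "(par ^^ (i - k)) (p ! (k + (i - k))) = p ! k"
    using path_par[OF p, of "i - k" k] i ki by simp
  ultimately have "q ! (j - (i - k)) = p ! k" using ji ki eq by simp
  thus ?thesis using j by (metis diff_le_self le_less_trans nth_mem)
qed

theorem mainTheorem6:
  fixes V :: "'v set" and E :: "'v \<Rightarrow> 'v \<Rightarrow> bool"
    and N :: "'n set" and r :: 'n and par :: "'n \<Rightarrow> 'n" and P :: "'v \<Rightarrow> 'n list"
    and v1 :: 'v
  assumes "simple_graph V E"
    and "rdv_rep V E N r par P"
    and "v1 \<in> V"
    and "\<forall>v\<in>V. depth r par (top_node P v) \<le> depth r par (top_node P v1)"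
  shows "simple_vertex V E v1"
proof -
  note G = assms(1)[unfolded simple_graph_def]
  have T: "rooted_tree N r par" using assms(2) unfolding rdv_rep_def by auto
  have Pd: "\<And>v. v \<in> V \<Longrightarrow> downward_path N r par (P v)" using assms(2) unfolding rdv_rep_def by auto
  have Ad: "\<And>v w. v \<in> V \<Longrightarrow> w \<in> V \<Longrightarrow> v \<noteq> w \<Longrightarrow> E v w \<longleftrightarrow> set (P v) \<inter> set (P w) \<noteq> {}"
    using assms(2) unfolding rdv_rep_def by auto
  define t1 where "t1 = hd (P v1)"
  define d where "d = (\<lambda>v. depth r par (hd (P v)))"
  have dle: "\<And>v. v \<in> V \<Longrightarrow> d v \<le> d v1" using assms(4) unfolding d_def top_node_def by auto
  have hdn: "\<And>v. v \<in> V \<Longrightarrow> hd (P v) = P v ! 0" using Pd unfolding downward_path_def by (simp add: hd_conv_nth)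
  define S where "S = closed_nbhd V E v1"
  have SV: "S \<subseteq> V" using assms(3) unfolding S_def closed_nbhd_def by auto
  have key: "\<And>w. w \<in> V \<Longrightarrow> set (P w) \<inter> set (P v1) \<noteq> {} \<Longrightarrow> t1 \<in> set (P w)"
  proof -
    fix w assume w: "w \<in> V" "set (P w) \<inter> set (P v1) \<noteq> {}"
    then obtain x where x: "x \<in> set (P w)" "x \<in> set (P v1)" by auto
    obtain i where i: "i < length (P v1)" "P v1 ! i = x" using x(2) by (meson in_set_conv_nth)
    obtain j where j: "j < length (P w)" "P w ! j = x" using x(1) by (meson in_set_conv_nth)
    have "P v1 ! 0 \<in> set (P w)"
      by (rule meet[OF T Pd[OF assms(3)] Pd[OF w(1)] i(1) j(1)]) (use i j dle[OF w(1)] hdn[OF assms(3)] d_def in auto)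
    thus "t1 \<in> set (P w)" using hdn[OF assms(3)] t1_def by simp
  qed
  have inS: "\<And>w. w \<in> S \<Longrightarrow> t1 \<in> set (P w)"
  proof -
    fix w assume "w \<in> S"
    show "t1 \<in> set (P w)"
    proof (cases "w = v1")
      case True then show ?thesis using Pd[OF assms(3)] unfolding t1_def downward_path_def by simp
    next
      case False
      then have "w \<in> V" "E v1 w" using \<open>w \<in> S\<close> unfolding S_def closed_nbhd_def by auto
      then show ?thesis using key Ad[OF assms(3) \<open>w \<in> V\<close>] False by blast
    qed
  qed
  have clique: "is_clique E S"
    unfolding is_clique_def
  proof (intro ballI impI)
    fix a b assume a: "a \<in> S" and b: "b \<in> S" and ab: "a \<noteq> b"
    show "E a b" using Ad[of a b] SV a b ab inS[OF a] inS[OF b] by auto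
  qed
  define aw where "aw = (\<lambda>w. d v1 - d w)"
  have pos: "\<And>w. w \<in> S \<Longrightarrow> aw w < length (P w) \<and> P w ! aw w = t1"
  proof -
    fix w assume w: "w \<in> S"
    obtain k where k: "k < length (P w)" "P w ! k = t1" using inS[OF w] by (meson in_set_conv_nth)
    have "depth r par (P w ! k) = depth r par (P w ! 0) + k" using path_depth[OF T Pd k(1)] w SV by auto
    hence "k = aw w" using k hdn w SV unfolding aw_def d_def t1_def by auto
    thus "aw w < length (P w) \<and> P w ! aw w = t1" using k by simp
  qed
  have nest: "\<And>w w'. w \<in> S \<Longrightarrow> w' \<in> S \<Longrightarrow> aw w \<le> aw w' \<Longrightarrow> closed_nbhd V E w \<subseteq> closed_nbhd V E w'"
  proof
    fix w w' u assume w: "w \<in> S" and w': "w' \<in> S" and le: "aw w \<le> aw w'" and u: "u \<in> closed_nbhd V E w"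
    have wV: "w \<in> V" and w'V: "w' \<in> V" using w w' SV by auto
    have dw: "d w \<le> d v1" "d w' \<le> d v1" using dle wV w'V by auto
    show "u \<in> closed_nbhd V E w'"
    proof (cases "u = w'")
      case True then show ?thesis unfolding closed_nbhd_def by simp
    next
      case uw': False
      show ?thesis
      proof (cases "u = w")
        case True
        then show ?thesis using clique w w' uw' unfolding is_clique_def closed_nbhd_def by (auto simp: wV)
      next
        case False
        then have uV: "u \<in> V" and Ewu: "E w u" using u unfolding closed_nbhd_def by auto
        then obtain x where x: "x \<in> set (P w)" "x \<in> set (P u)" using Ad[OF wV uV] False by auto
        obtain j where j: "j < length (P w)" "P w ! j = x" using x(1) by (meson in_set_conv_nth)
        obtain k where k: "k < length (P u)" "P u ! k = x" using x(2) by (meson in_set_conv_nth)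
        have pw: "aw w < length (P w)" "P w ! aw w = t1" using pos[OF w] by auto
        have pw': "aw w' < length (P w')" "P w' ! aw w' = t1" using pos[OF w'] by auto
        show ?thesis
        proof (cases "aw w \<le> j")
          case True
          have dt1: "depth r par t1 = d v1" unfolding d_def t1_def by simp
          have "P w ! aw w \<in> set (P u)"
            by (rule meet[OF T Pd[OF wV] Pd[OF uV] j(1) k(1)]) (use j k True pw dt1 dle[OF uV] d_def in auto)
          hence "t1 \<in> set (P u)" using pw by simp
          hence "E w' u" using Ad[OF w'V uV] uw' inS[OF w'] by auto
          then show ?thesis unfolding closed_nbhd_def using uV by auto
        next
          case False
          have dj: "depth r par (P w ! j) = d w + j"
            using path_depth[OF T Pd[OF wV] j(1)] hdn[OF wV] d_def by simp
          have "d w' \<le> d w" using le dw unfolding aw_def by simp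
          have "P w ! j \<in> set (P w')"
            by (rule meet[OF T Pd[OF wV] Pd[OF w'V] pw(1) pw'(1)])
               (use pw pw' False dj \<open>d w' \<le> d w\<close> d_def in auto)
          hence "set (P w') \<inter> set (P u) \<noteq> {}" using j x by auto
          hence "E w' u" using Ad[OF w'V uV] uw' by auto
          then show ?thesis unfolding closed_nbhd_def using uV by auto
        qed
      qed
    qed
  qed
  have fin: "finite S" using G SV finite_subset by blast
  obtain xs where xs: "distinct xs" "set xs = S" using finite_distinct_list[OF fin] by blast
  define ws where "ws = sort_key aw xs"
  have "sorted (map aw ws)" unfolding ws_def by simp
  hence srt: "sorted_wrt (\<lambda>a b. aw a \<le> aw b) ws" by (simp add: sorted_wrt_map)
  have "set ws = S" using xs unfolding ws_def by simp
  have "sorted_wrt (\<lambda>a b. closed_nbhd V E a \<subseteq> closed_nbhd V E b) ws"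
  proof (rule sorted_wrt_mono_rel[rotated])
    show "sorted_wrt (\<lambda>a b. aw a \<le> aw b) ws" by (rule srt)
  next
    fix a b assume "a \<in> set ws" "b \<in> set ws" "aw a \<le> aw b"
    then show "closed_nbhd V E a \<subseteq> closed_nbhd V E b" using nest \<open>set ws = S\<close> by blast
  qed
  moreover have "distinct ws" using xs unfolding ws_def by simp
  ultimately show ?thesis unfolding simple_vertex_def using clique \<open>set ws = S\<close> unfolding S_def by blast
qed

end
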